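(* Let $k\ge1$ and $0<a\le1$, and consider on $[0,+\infty)$ the function $$f_{a,k}(s):=\Big(1-\big(\tfrac{s}{a}\big)^{2k}\Big)^{2k}s+\Big(1-\Big(1-\big(\tfrac{s}{a}\big)^{2k}\Big)^{2k}\Big)\sqrt{s},$$ which is a semialgebraic function of class $C^{2k}$. Then: $f_{a,k}$ is non-negative and strictly increasing on $[0,a]$; the Taylor polynomial of $f_{a,k}$ of degree $2k$ at $s=0$ is $s$; the Taylor polynomials of degree $2k-1$ of $f_{a,k}$ and of $\sqrt{s}$ at $s=a$ coincide; and $f_{a,k}(s)\le\sqrt{s}$ for all $s\in[0,1]$. *)

theory Defs
  imports "HOL-Analysis.Analysis"
begin

definition f_ak :: "real \<Rightarrow> nat \<Rightarrow> real \<Rightarrow> real" where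
  "f_ak a k s = (1 - (s / a) ^ (2 * k)) ^ (2 * k) * s
               + (1 - (1 - (s / a) ^ (2 * k)) ^ (2 * k)) * sqrt s"

definition is_taylor_poly ::
    "(real \<Rightarrow> real) \<Rightarrow> real set \<Rightarrow> nat \<Rightarrow> real \<Rightarrow> (real \<Rightarrow> real) \<Rightarrow> bool" where
  "is_taylor_poly f S n x0 P \<longleftrightarrow>
     x0 \<in> S \<and>
     (\<exists>D :: nat \<Rightarrow> real \<Rightarrow> real.
        (\<forall>x\<in>S. D 0 x = f x) \<and>
        (\<forall>j<n. \<forall>x\<in>S. (D j has_real_derivative D (Suc j) x) (at x within S)) \<and>
        (\<forall>s. P s = (\<Sum>j\<le>n. D j x0 / fact j * (s - x0) ^ j)))"

end

theory Submission
  imports Defs "HOL-Computational_Algebra.Polynomial"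
begin


lemma dvd_pderiv_pow:
  fixes q G :: "real poly"
  assumes "q ^ Suc m dvd G"
  shows "q ^ m dvd pderiv G"
proof -
  obtain Q where G: "G = q ^ Suc m * Q" using assms by (auto elim: dvdE)
  have "pderiv G = smult (of_nat (Suc m)) (q ^ m) * pderiv q * Q + q ^ Suc m * pderiv Q"
    unfolding G pderiv_mult pderiv_power_Suc by (simp add: ac_simps)
  also have "q ^ m dvd \<dots>"
    by (intro dvd_add dvd_smult dvd_mult2 dvd_mult) auto
  finally show ?thesis .
qed

lemma coeff_xpow_mult:
  fixes Q :: "real poly"
  assumes "i < n" shows "coeff ([:0,1:] ^ n * Q) i = 0"
  using assms
proof (induction n arbitrary: i)
  case 0 then show ?case by simp
next
  case (Suc n)
  have e: "[:0,1:] ^ Suc n * Q = pCons 0 ([:0,1:] ^ n * Q)"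
    by (simp add: mult.assoc)
  show ?case unfolding e using Suc by (cases i) auto
qed

lemma deriv_xsqrt:
  fixes x :: real assumes "x \<ge> 0"
  shows "((\<lambda>s. s * sqrt s) has_real_derivative (3/2) * sqrt x) (at x within {0..})"
proof (cases "x = 0")
  case False
  then have xp: "x > 0" using assms by simp
  have "((\<lambda>s. s * sqrt s) has_real_derivative 1 * sqrt x + (inverse (sqrt x) / 2) * x) (at x)"
    by (rule DERIV_mult[OF DERIV_ident DERIV_real_sqrt[OF xp]])
  moreover have "1 * sqrt x + (inverse (sqrt x) / 2) * x = (3/2) * sqrt x"
    using xp by (simp add: field_simps)
  ultimately show ?thesis by (metis has_field_derivative_at_within)
next
  case True
  have "(sqrt \<longlongrightarrow> 0) (at 0 within {0..})"
    using tendsto_real_sqrt[OF tendsto_ident_at[of 0 "{0..}"]] by simp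
  moreover have "\<forall>\<^sub>F y in at 0 within {0..}. sqrt y = (y * sqrt y - 0 * sqrt 0) / (y - 0)"
    by (auto simp: eventually_at_filter)
  ultimately have "((\<lambda>y. (y * sqrt y - 0 * sqrt 0) / (y - 0)) \<longlongrightarrow> 0) (at 0 within {0..})"
    using tendsto_cong by fastforce
  then show ?thesis using True by (simp add: has_field_derivative_iff)
qed



definition tstep :: "real poly \<times> real poly \<Rightarrow> real poly \<times> real poly" where
  "tstep p = (pderiv (fst p), pderiv (snd p) + smult (1/2) (snd p div [:0,1:]))"

lemma chain_step:
  fixes A B :: "real poly" and x :: real
  assumes "[:0,1:] dvd B" "x \<ge> 0"
  shows "((\<lambda>s. poly A s + poly B s * sqrt s) has_real_derivative
     (poly (pderiv A) x + poly (pderiv B + smult (1/2) (B div [:0,1:])) x * sqrt x)) (at x within {0..})"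
proof -
  define C where "C = B div [:0,1:]"
  have B: "B = [:0,1:] * C" using assms(1) unfolding C_def by (metis dvd_mult_div_cancel)
  have e: "\<And>s. poly A s + poly B s * sqrt s = poly A s + poly C s * (s * sqrt s)"
    unfolding B by simp
  have "((\<lambda>s. poly A s + poly C s * (s * sqrt s)) has_real_derivative
     (poly (pderiv A) x + (poly (pderiv C) x * (x * sqrt x) + (3/2) * sqrt x * poly C x))) (at x within {0..})"
    by (intro DERIV_add DERIV_mult poly_DERIV[THEN has_field_derivative_at_within] deriv_xsqrt assms(2))
  moreover have "poly (pderiv A) x + (poly (pderiv C) x * (x * sqrt x) + (3/2) * sqrt x * poly C x)
     = poly (pderiv A) x + poly (pderiv B + smult (1/2) (B div [:0,1:])) x * sqrt x"
    unfolding C_def[symmetric] by (simp add: B pderiv_mult pderiv_pCons algebra_simps)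
  ultimately show ?thesis unfolding e by simp
qed

lemma dvd_tstep:
  fixes B :: "real poly"
  assumes "[:0,1:] ^ Suc m dvd B"
  shows "[:0,1:] ^ m dvd snd (tstep (A, B))"
proof -
  obtain Q where B: "B = [:0,1:] ^ Suc m * Q" using assms by (auto elim: dvdE)
  have "B div [:0,1:] = [:0,1:] ^ m * Q" unfolding B
    by (metis (no_types, lifting) mult.assoc nonzero_mult_div_cancel_left power_Suc pCons_eq_0_iff zero_neq_one)
  then show ?thesis unfolding tstep_def using dvd_pderiv_pow[OF assms]
    by (auto intro!: dvd_add dvd_smult)
qed

fun M :: "(nat \<Rightarrow> real \<Rightarrow> real) \<Rightarrow> real poly \<Rightarrow> nat \<Rightarrow> nat \<Rightarrow> real \<Rightarrow> real" where
  "M Hd G i 0 = (\<lambda>s. poly G s * Hd i s)"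
| "M Hd G i (Suc j) = (\<lambda>s. M Hd (pderiv G) i j s + M Hd G (Suc i) j s)"

lemma M_chain:
  assumes "\<And>i x. x \<in> S \<Longrightarrow> (Hd i has_real_derivative Hd (Suc i) x) (at x within S)"
    and "x \<in> S"
  shows "(M Hd G i j has_real_derivative M Hd G i (Suc j) x) (at x within S)"
  using assms(2)
proof (induction j arbitrary: G i x)
  case 0
  have "((\<lambda>s. poly G s * Hd i s) has_real_derivative
        poly (pderiv G) x * Hd i x + Hd (Suc i) x * poly G x) (at x within S)"
    by (intro DERIV_mult poly_DERIV[THEN has_field_derivative_at_within] assms(1) 0)
  then show ?case by (simp add: mult.commute)
next
  case (Suc j)
  show ?case
    using DERIV_add[OF Suc.IH[where G="pderiv G" and i=i and x=x] Suc.IH[where G=G and i="Suc i" and x=x]] Suc.prems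
    by simp
qed

lemma M_zero:
  assumes "[:-c,1:] ^ m dvd G" "j < m"
  shows "M Hd G i j c = 0"
  using assms
proof (induction j arbitrary: G i m)
  case 0
  then have "[:-c,1:] dvd G" by (metis dvd_power dvd_trans neq0_conv)
  then show ?case by (simp add: poly_eq_0_iff_dvd)
next
  case (Suc j)
  then obtain m' where m: "m = Suc m'" "j < m'" by (cases m) auto
  have "M Hd (pderiv G) i j c = 0"
    using Suc.IH[where G="pderiv G" and m=m' and i=i] dvd_pderiv_pow Suc.prems m by auto
  moreover have "M Hd G (Suc i) j c = 0"
    using Suc.IH[where G=G and m=m and i="Suc i"] Suc.prems m by auto
  ultimately show ?case by simp
qed



lemma f_alt: "f_ak a k s = sqrt s - (1 - (s / a) ^ (2 * k)) ^ (2 * k) * (sqrt s - s)"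
  unfolding f_ak_def by (simp add: algebra_simps)

lemma g_bounds:
  fixes a s :: real assumes "0 < a" "0 \<le> s" "s \<le> a"
  shows "0 \<le> (1 - (s / a) ^ (2 * k)) ^ (2 * k)" "(1 - (s / a) ^ (2 * k)) ^ (2 * k) \<le> 1"
proof -
  have "0 \<le> s / a" "s / a \<le> 1" using assms by auto
  then have "0 \<le> (s / a) ^ (2 * k)" "(s / a) ^ (2 * k) \<le> 1" by (auto intro: power_le_one)
  then show "0 \<le> (1 - (s / a) ^ (2 * k)) ^ (2 * k)" "(1 - (s / a) ^ (2 * k)) ^ (2 * k) \<le> 1"
    by (auto intro: power_le_one)
qed

lemma g_mono:
  fixes a x y :: real assumes "0 < a" "0 \<le> x" "x \<le> y" "y \<le> a"
  shows "(1 - (y / a) ^ (2 * k)) ^ (2 * k) \<le> (1 - (x / a) ^ (2 * k)) ^ (2 * k)"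
proof -
  have "x / a \<le> y / a" "0 \<le> x / a" "y / a \<le> 1" using assms by (auto simp: divide_right_mono)
  then have "(x / a) ^ (2 * k) \<le> (y / a) ^ (2 * k)" "(y / a) ^ (2 * k) \<le> 1"
    by (auto intro: power_mono power_le_one)
  then show ?thesis by (intro power_mono) auto
qed

lemma sqrt_ge_self: "0 \<le> (s::real) \<Longrightarrow> s \<le> 1 \<Longrightarrow> s \<le> sqrt s"
proof -
  assume h: "0 \<le> s" "s \<le> 1"
  then have "sqrt s \<le> 1" "0 \<le> sqrt s" by auto
  then have "sqrt s * sqrt s \<le> sqrt s" by (rule mult_left_le)
  moreover have "sqrt s * sqrt s = s" using h by simp
  ultimately show ?thesis by simp
qed

lemma part1:
  assumes "0 < a" "a \<le> 1" "s \<in> {0..a}"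
  shows "f_ak a k s \<ge> 0"
proof -
  let ?g = "(1 - (s / a) ^ (2 * k)) ^ (2 * k)"
  have "0 \<le> ?g" "?g \<le> 1" using g_bounds[of a s k] assms by auto
  then show ?thesis unfolding f_ak_def using assms by auto
qed

lemma part5:
  assumes "s \<in> {0..1::real}"
  shows "f_ak a k s \<le> sqrt s"
proof -
  let ?g = "(1 - (s / a) ^ (2 * k)) ^ (2 * k)"
  have "0 \<le> ?g" by (simp add: zero_le_even_power)
  moreover have "s \<le> sqrt s" using assms sqrt_ge_self by auto
  ultimately show ?thesis unfolding f_alt by (simp add: mult_nonneg_nonneg)
qed

lemma part2:
  assumes "0 < a" "a \<le> 1"
  shows "strict_mono_on {0..a} (f_ak a k)"
proof (rule strict_mono_onI)
  fix x y assume xy: "x \<in> {0..a}" "y \<in> {0..a}" "x < y"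
  define gx where "gx = (1 - (x / a) ^ (2 * k)) ^ (2 * k)"
  define gy where "gy = (1 - (y / a) ^ (2 * k)) ^ (2 * k)"
  have gy: "0 \<le> gy" "gy \<le> 1" unfolding gy_def using g_bounds[of a y k] assms xy by auto
  have gxy: "gy \<le> gx" unfolding gx_def gy_def using g_mono[of a x y k] assms xy by auto
  have hx: "0 \<le> sqrt x - x" using sqrt_ge_self[of x] xy assms by auto
  have sq: "sqrt x < sqrt y" using xy by auto
  have d: "f_ak a k y - f_ak a k x = (1 - gy) * (sqrt y - sqrt x) + gy * (y - x) + (gx - gy) * (sqrt x - x)"
    unfolding f_alt gx_def[symmetric] gy_def[symmetric] by (simp add: algebra_simps)
  have "0 \<le> (gx - gy) * (sqrt x - x)" using gxy hx by simp
  moreover have "0 < (1 - gy) * (sqrt y - sqrt x) + gy * (y - x)"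
  proof (cases "gy = 1")
    case True then show ?thesis using xy by simp
  next
    case False
    then have "0 < (1 - gy) * (sqrt y - sqrt x)" using gy sq by simp
    moreover have "0 \<le> gy * (y - x)" using gy xy by simp
    ultimately show ?thesis by linarith
  qed
  ultimately show "f_ak a k x < f_ak a k y" using d by linarith
qed



lemma poly_facts:
  fixes a :: real and k :: nat
  defines "t \<equiv> [:0, 1/a:] ^ (2*k)"
  defines "Gp \<equiv> (1 - t) ^ (2*k)"
  shows "poly Gp s = (1 - (s / a) ^ (2 * k)) ^ (2 * k)"
  unfolding Gp_def t_def by (simp add: poly_power)

lemma xdvd_t: "[:0,1:] ^ (2*k) dvd ([:0, 1/a:] ^ (2*k) :: real poly)"
proof -
  have "[:-0,1:] dvd ([:0, 1/a:] :: real poly)" by (subst poly_eq_0_iff_dvd[symmetric]) simp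
  then show ?thesis by (intro dvd_power_same) simp
qed

lemma part3:
  assumes "k \<ge> 1" "0 < a"
  shows "is_taylor_poly (f_ak a k) {0..} (2 * k) 0 (\<lambda>s. s)"
proof -
  define t :: "real poly" where "t = [:0, 1/a:] ^ (2*k)"
  define Gp where "Gp = (1 - t) ^ (2*k)"
  define R where "R = 1 - Gp"
  define A0 where "A0 = [:0,1:] * Gp"
  have pG: "\<And>s. poly Gp s = (1 - (s / a) ^ (2 * k)) ^ (2 * k)"
    unfolding Gp_def t_def by (simp add: poly_power)
  have Rdvd: "[:0,1:] ^ (2*k) dvd R"
  proof -
    have "R = t * sum ((^) (1 - t)) {..<2*k}"
      unfolding R_def Gp_def one_diff_power_eq by simp
    then show ?thesis using xdvd_t[of k a] unfolding t_def[symmetric] by simp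
  qed
  define AB where "AB = (\<lambda>j. (tstep ^^ j) (A0, R))"
  define D where "D = (\<lambda>j s. poly (fst (AB j)) s + poly (snd (AB j)) s * sqrt s)"
  have fstAB: "fst (AB j) = (pderiv ^^ j) A0" for j
    by (induction j) (auto simp: AB_def tstep_def)
  have sndAB: "j \<le> 2*k \<Longrightarrow> [:0,1:] ^ (2*k - j) dvd snd (AB j)" for j
  proof (induction j)
    case 0 then show ?case using Rdvd by (simp add: AB_def)
  next
    case (Suc j)
    then have "[:0,1:] ^ Suc (2*k - Suc j) dvd snd (AB j)"
      by (metis Suc_diff_Suc Suc_leD Suc_le_lessD)
    from dvd_tstep[OF this, of "fst (AB j)"] show ?case by (simp add: AB_def)
  qed
  have D0: "D 0 s = f_ak a k s" for s
    unfolding D_def AB_def f_ak_def R_def A0_def by (simp add: pG algebra_simps)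
  have Dchain: "(D j has_real_derivative D (Suc j) x) (at x within {0..})"
    if "j < 2*k" "x \<in> {0..}" for j x
  proof -
    have "[:0,1:] ^ Suc (2*k - Suc j) dvd snd (AB j)"
      using sndAB[of j] that by (metis Suc_diff_Suc less_imp_le_nat)
    then have dv: "[:0,1:] dvd snd (AB j)" by (metis dvd_power dvd_trans zero_less_Suc)
    have e: "AB (Suc j) = tstep (AB j)" by (simp add: AB_def)
    show ?thesis unfolding D_def e using chain_step[OF dv, of x "fst (AB j)"] that
      by (simp add: tstep_def)
  qed
  have coefA: "coeff A0 j = (if j = 1 then 1 else 0)" if "j \<le> 2*k" for j
  proof -
    obtain Q where Q: "R = [:0,1:] ^ (2*k) * Q" using Rdvd by (auto elim: dvdE)
    have "A0 = [:0,1:] - [:0,1:] ^ (Suc (2*k)) * Q"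
      unfolding A0_def using Q by (simp add: R_def algebra_simps)
    then show ?thesis using coeff_xpow_mult[of j "Suc (2*k)" Q] that
      by (auto simp: coeff_pCons split: nat.splits)
  qed
  have Dat0: "D j 0 = fact j * coeff A0 j" for j
    unfolding D_def fstAB by (simp add: poly_0_coeff_0 coeff_higher_pderiv pochhammer_fact)
  have P: "(\<Sum>j\<le>2*k. D j 0 / fact j * (s - 0) ^ j) = s" for s
  proof -
    have "(\<Sum>j\<le>2*k. D j 0 / fact j * (s - 0) ^ j) = (\<Sum>j\<le>2*k. if j = 1 then s else 0)"
      by (intro sum.cong refl) (simp add: Dat0 coefA)
    also have "\<dots> = s" using assms(1) by simp
    finally show ?thesis .
  qed
  show ?thesis unfolding is_taylor_poly_def
    using D0 Dchain P by (intro conjI exI[of _ D]) auto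
qed



definition Ds :: "nat \<Rightarrow> real \<Rightarrow> real" where
  "Ds j s = (\<Prod>i<j. 1/2 - real i) * s powr (1/2 - real j)"

lemma Ds_chain:
  assumes "x \<in> {0<..}"
  shows "(Ds j has_real_derivative Ds (Suc j) x) (at x within {0<..})"
proof -
  have x: "0 < x" using assms by simp
  have "((\<lambda>s. (\<Prod>i<j. 1/2 - real i) * s powr (1/2 - real j)) has_real_derivative
      (\<Prod>i<j. 1/2 - real i) * ((1/2 - real j) * x powr (1/2 - real j - real 1) * 1)) (at x)"
    by (intro DERIV_cmult DERIV_fun_powr DERIV_ident x)
  moreover have "(\<Prod>i<j. 1/2 - real i) * ((1/2 - real j) * x powr (1/2 - real j - real 1) * 1)
     = Ds (Suc j) x"
    unfolding Ds_def by (simp add: algebra_simps)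
  ultimately show ?thesis unfolding Ds_def[abs_def]
    by (metis has_field_derivative_at_within)
qed

definition Lp :: "nat \<Rightarrow> real \<Rightarrow> real" where
  "Lp i s = (if i = 0 then s else if i = 1 then 1 else 0)"

lemma Lp_chain: "(Lp i has_real_derivative Lp (Suc i) x) (at x within S)"
proof (cases i)
  case 0
  then show ?thesis unfolding Lp_def[abs_def] by (simp add: DERIV_ident)
next
  case (Suc i')
  then show ?thesis unfolding Lp_def[abs_def] by simp
qed

lemma part4:
  assumes "k \<ge> 1" "0 < a"
  shows "\<exists>P. is_taylor_poly (f_ak a k) {0<..} (2 * k - 1) a P
           \<and> is_taylor_poly sqrt {0<..} (2 * k - 1) a P"
proof -
  define t :: "real poly" where "t = [:0, 1/a:] ^ (2*k)"
  define Gp where "Gp = (1 - t) ^ (2*k)"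
  have pG: "\<And>s. poly Gp s = (1 - (s / a) ^ (2 * k)) ^ (2 * k)"
    unfolding Gp_def t_def by (simp add: poly_power)
  have Gdvd: "[:-a,1:] ^ (2*k) dvd Gp"
  proof -
    have "poly (1 - t) a = 0" using assms(2) unfolding t_def by (simp add: poly_power)
    then have "[:-a,1:] dvd (1 - t)" by (subst poly_eq_0_iff_dvd[symmetric])
    then show ?thesis unfolding Gp_def by (rule dvd_power_same)
  qed
  define Hd where "Hd = (\<lambda>i s. Lp i s - Ds i s)"
  have Hchain: "(Hd i has_real_derivative Hd (Suc i) x) (at x within {0<..})"
    if "x \<in> {0<..}" for i x
    unfolding Hd_def by (intro DERIV_diff Lp_chain Ds_chain that)
  define Df where "Df = (\<lambda>j s. Ds j s + M Hd Gp 0 j s)"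
  define P where "P = (\<lambda>s. \<Sum>j\<le>2*k-1. Ds j a / fact j * (s - a) ^ j)"
  have Ds0: "Ds 0 x = sqrt x" if "x \<in> {0<..}" for x
    using that by (simp add: Ds_def powr_half_sqrt)
  have Df0: "Df 0 x = f_ak a k x" if "x \<in> {0<..}" for x
    using Ds0[OF that] unfolding Df_def f_alt by (simp add: Hd_def Lp_def pG Ds_def algebra_simps)
  have Dfchain: "(Df j has_real_derivative Df (Suc j) x) (at x within {0<..})"
    if "x \<in> {0<..}" for j x
    unfolding Df_def
    by (intro DERIV_add Ds_chain M_chain[where Hd=Hd] Hchain that)
  have Dfa: "Df j a = Ds j a" if "j \<le> 2*k-1" for j
    unfolding Df_def using M_zero[OF Gdvd, of j Hd 0] that assms(1) by simp
  have T1: "is_taylor_poly (f_ak a k) {0<..} (2 * k - 1) a P"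
    unfolding is_taylor_poly_def
    using Df0 Dfchain Dfa assms(2)
    by (intro conjI exI[of _ Df]) (auto simp: P_def intro!: sum.cong)
  have T2: "is_taylor_poly sqrt {0<..} (2 * k - 1) a P"
    unfolding is_taylor_poly_def
    using Ds0 Ds_chain assms(2)
    by (intro conjI exI[of _ Ds]) (auto simp: P_def)
  show ?thesis using T1 T2 by blast
qed


theorem lemma3p1:
  fixes a :: real and k :: nat
  assumes "k \<ge> 1" and "0 < a" and "a \<le> 1"
  shows "(\<forall>s\<in>{0..a}. f_ak a k s \<ge> 0)
    \<and> strict_mono_on {0..a} (f_ak a k)
    \<and> is_taylor_poly (f_ak a k) {0..} (2 * k) 0 (\<lambda>s. s)
    \<and> (\<exists>P. is_taylor_poly (f_ak a k) {0<..} (2 * k - 1) a P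
           \<and> is_taylor_poly sqrt {0<..} (2 * k - 1) a P)
    \<and> (\<forall>s\<in>{0..1}. f_ak a k s \<le> sqrt s)"
  using part1[OF assms(2,3)] part2[OF assms(2,3)] part3[OF assms(1,2)] part4[OF assms(1,2)] part5
  by blast

end
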